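(* Let $(A,\cdot,\alpha)$ be an anticommutative multiplicative Hom-algebra over a field $\mathbb{K}$ of characteristic $0$. Then: (i) $J_{\alpha}(x,y,z)$ is skew-symmetric in its three variables; (ii) for all $w,x,y,z\in A$, $$\alpha^{2}(w)\cdot J_{\alpha}(x,y,z)-\alpha^{2}(x)\cdot J_{\alpha}(y,z,w)+\alpha^{2}(y)\cdot J_{\alpha}(z,w,x)-\alpha^{2}(z)\cdot J_{\alpha}(w,x,y)$$ $$= J_{\alpha}(w\cdot x,\alpha(y),\alpha(z))+J_{\alpha}(y\cdot z,\alpha(w),\alpha(x))+J_{\alpha}(w\cdot y,\alpha(z),\alpha(x))+J_{\alpha}(z\cdot x,\alpha(w),\alpha(y))-J_{\alpha}(z\cdot w,\alpha(x),\alpha(y))-J_{\alpha}(x\cdot y,\alpha(z),\alpha(w)).$$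
   Context: A multiplicative Hom-algebra is a triple $(A,\cdot,\alpha)$ with $A$ a vector space over $\mathbb{K}$, $\cdot$ a bilinear product, and $\alpha:A\to A$ linear with $\alpha(x\cdot y)=\alpha(x)\cdot\alpha(y)$. Anticommutative means $x\cdot y=-y\cdot x$. The Hom-Jacobian is $J_{\alpha}(x,y,z)=(x\cdot y)\cdot\alpha(z)+(y\cdot z)\cdot\alpha(x)+(z\cdot x)\cdot\alpha(y)$. *)

theory Defs
  imports Complex_Main
begin

definition bilinear_prod :: "('k::field \<Rightarrow> 'a::ab_group_add \<Rightarrow> 'a) \<Rightarrow> ('a \<Rightarrow> 'a \<Rightarrow> 'a) \<Rightarrow> bool" where
  "bilinear_prod scale mult \<longleftrightarrow>
     (\<forall>y. Vector_Spaces.linear scale scale (\<lambda>x. mult x y)) \<and>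
     (\<forall>x. Vector_Spaces.linear scale scale (\<lambda>y. mult x y))"

definition multiplicative_hom_algebra ::
  "('k::field \<Rightarrow> 'a::ab_group_add \<Rightarrow> 'a) \<Rightarrow> ('a \<Rightarrow> 'a \<Rightarrow> 'a) \<Rightarrow> ('a \<Rightarrow> 'a) \<Rightarrow> bool" where
  "multiplicative_hom_algebra scale mult alpha \<longleftrightarrow>
     vector_space scale \<and> bilinear_prod scale mult \<and>
     Vector_Spaces.linear scale scale alpha \<and>
     (\<forall>x y. alpha (mult x y) = mult (alpha x) (alpha y))"

definition anticommutative :: "('a::ab_group_add \<Rightarrow> 'a \<Rightarrow> 'a) \<Rightarrow> bool" where
  "anticommutative mult \<longleftrightarrow> (\<forall>x y. mult x y = - mult y x)"

definition hom_jacobian :: "('a::ab_group_add \<Rightarrow> 'a \<Rightarrow> 'a) \<Rightarrow> ('a \<Rightarrow> 'a) \<Rightarrow> 'a \<Rightarrow> 'a \<Rightarrow> 'a \<Rightarrow> 'a" where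
  "hom_jacobian mult alpha x y z =
     mult (mult x y) (alpha z) + mult (mult y z) (alpha x) + mult (mult z x) (alpha y)"

end

theory Submission
  imports Defs
begin

theorem lemma2p4:
  fixes scale :: "'k::field_char_0 \<Rightarrow> 'a::ab_group_add \<Rightarrow> 'a"
    and mult :: "'a \<Rightarrow> 'a \<Rightarrow> 'a"
    and alpha :: "'a \<Rightarrow> 'a"
  assumes "multiplicative_hom_algebra scale mult alpha"
    and "anticommutative mult"
  defines "J \<equiv> hom_jacobian mult alpha"
  shows "(\<forall>x y z. J x y z = - J y x z \<and> J x y z = - J x z y \<and> J x y z = - J z y x)
    \<and> (\<forall>w x y z.
        mult (alpha (alpha w)) (J x y z) - mult (alpha (alpha x)) (J y z w)
        + mult (alpha (alpha y)) (J z w x) - mult (alpha (alpha z)) (J w x y)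
      = J (mult w x) (alpha y) (alpha z) + J (mult y z) (alpha w) (alpha x)
        + J (mult w y) (alpha z) (alpha x) + J (mult z x) (alpha w) (alpha y)
        - J (mult z w) (alpha x) (alpha y) - J (mult x y) (alpha z) (alpha w))"
proof -
  have bl: "bilinear_prod scale mult" and la: "Vector_Spaces.linear scale scale alpha"
    and hm: "\<And>x y. alpha (mult x y) = mult (alpha x) (alpha y)"
    using assms(1) unfolding multiplicative_hom_algebra_def by auto
  have ac: "mult x y = - mult y x" for x y using assms(2) unfolding anticommutative_def by blast
  have A1: "\<forall>y a b. mult (a + b) y = mult a y + mult b y" and A2: "\<forall>c a b. mult c (a + b) = mult c a + mult c b"
    and A3: "\<forall>a b. alpha (a + b) = alpha a + alpha b"
    using bl la unfolding bilinear_prod_def Vector_Spaces.linear_iff by blast+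
  have a1: "mult (a + b) c = mult a c + mult b c" for a b c using A1 by blast
  have a2: "mult c (a + b) = mult c a + mult c b" for a b c using A2 by blast
  have p1: "alpha (a + b) = alpha a + alpha b" for a b using A3 by blast
  have z1: "mult 0 c = 0" for c using a1[of 0 0 c] by simp
  have z2: "mult c 0 = 0" for c using a2[of c 0 0] by simp
  have n1: "mult (- a) c = - mult a c" for a c using a1[of a "-a" c] z1[of c] by (simp add: eq_neg_iff_add_eq_0 add.commute)
  have n2: "mult c (- a) = - mult c a" for a c using a2[of c a "-a"] z2[of c] by (simp add: eq_neg_iff_add_eq_0 add.commute)
  have d1: "mult (a - b) c = mult a c - mult b c" for a b c using a1[of a "-b" c] n1[of b c] by simp
  have d2: "mult c (a - b) = mult c a - mult c b" for a b c using a2[of c a "-b"] n2[of c b] by simp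
  have J: "J x y z = mult (mult x y) (alpha z) + mult (mult y z) (alpha x) + mult (mult z x) (alpha y)" for x y z
    unfolding J_def hom_jacobian_def by simp
  have part1: "\<forall>x y z. J x y z = - J y x z \<and> J x y z = - J x z y \<and> J x y z = - J z y x"
  proof (intro allI conjI)
    fix x y z
    show "J x y z = - J y x z" unfolding J using ac[of x y] ac[of y z] ac[of z x]
      by (simp add: n1 algebra_simps)
    show "J x y z = - J x z y" unfolding J using ac[of z y] ac[of y x] ac[of x z]
      by (simp add: n1 algebra_simps)
    show "J x y z = - J z y x" unfolding J using ac[of x y] ac[of y z] ac[of z x]
      by (simp add: n1 algebra_simps)
  qed
  show ?thesis
  proof (intro conjI part1 allI)
    fix w x y z
    show "mult (alpha (alpha w)) (J x y z) - mult (alpha (alpha x)) (J y z w)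
        + mult (alpha (alpha y)) (J z w x) - mult (alpha (alpha z)) (J w x y)
      = J (mult w x) (alpha y) (alpha z) + J (mult y z) (alpha w) (alpha x)
        + J (mult w y) (alpha z) (alpha x) + J (mult z x) (alpha w) (alpha y)
        - J (mult z w) (alpha x) (alpha y) - J (mult x y) (alpha z) (alpha w)"
    proof -
      have r1: "mult (alpha (alpha a)) b = - mult b (alpha (alpha a))" for a b by (rule ac)
      have r2: "mult (alpha a) (mult b c) = - mult (mult b c) (alpha a)" for a b c by (rule ac)
      have r3: "mult x z = - mult z x" "mult y w = - mult w y" by (rule ac)+
      have r4: "mult (mult (alpha w) (alpha x)) (mult (alpha y) (alpha z)) = - mult (mult (alpha y) (alpha z)) (mult (alpha w) (alpha x))"
        "mult (mult (alpha w) (alpha y)) (mult (alpha z) (alpha x)) = - mult (mult (alpha z) (alpha x)) (mult (alpha w) (alpha y))"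
        "mult (mult (alpha z) (alpha w)) (mult (alpha x) (alpha y)) = - mult (mult (alpha x) (alpha y)) (mult (alpha z) (alpha w))"
        by (rule ac)+
      show ?thesis
        unfolding J hm a1 a2 d1 d2 n1 n2
        apply (simp only: r1 r2 r3 r4 n1 n2 a1 a2 minus_minus)
        apply (simp add: algebra_simps)
        done
    qed
  qed
qed

end
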